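(* Let $q$ be a prime power, $l\ge1$, $t=q^l$, and let $i$ be an integer with $1\le i<q-1$. Let $G_4(x)=x^t+x^{t-1}+1$, $G_5(x)=x^{t+1}+x^t+x$, and $L_4^*=\{\alpha\in GF(t^2):\ \alpha\neq0,\ G_4(\alpha)\ne0\}=\{\alpha_1,\dots,\alpha_n\}$. Let $H_4^{*(i)}$ be the $it\times n$ matrix with entries $\alpha_k^s/G_4(\alpha_k)^i$ ($s=0,\dots,it-1$, $k=1,\dots,n$). Then the matrix obtained by placing the row $\big(1/G_5(\alpha_1)^i,\dots,1/G_5(\alpha_n)^i\big)$ on top of $H_4^{*(i)}$ is a parity-check matrix of $\Gamma_5^{(i)}=\Gamma(L_4^*,G_5^i)$; that is, $\Gamma_5^{(i)}=\{c\in\Gamma_4^{*(i)}:\ \sum_k c_k/G_5(\alpha_k)^i=0\}$ where $\Gamma_4^{*(i)}=\Gamma(L_4^*,G_4^i)$, and the entries $1/G_5(\alpha_k)^i$ all lie in $GF(t)$.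
   Context: For a set $L=\{\alpha_1,\dots,\alpha_n\}$ of distinct elements of $GF(t^2)$ and $P\in GF(t^2)[x]$ with $P(\alpha_k)\neq0$ for all $k$, the $q$-ary Goppa code is $\Gamma(L,P)=\{c\in GF(q)^n:\ \sum_k c_k\alpha_k^s/P(\alpha_k)=0 \text{ for } s=0,\dots,\deg P-1\}$. A matrix $H$ over $GF(t^2)$ is a parity-check matrix of a $q$-ary code $C$ if $C=\{c\in GF(q)^n: cH^T=0\}$. *)

theory Defs
  imports "HOL-Computational_Algebra.Computational_Algebra"
begin

text \<open>The subfield GF(k) of a finite field of order k^m, realised as the set
  of elements fixed by x |-> x^k.\<close>
definition subfield_GF :: "nat \<Rightarrow> ('a::field) set" where
  "subfield_GF k = {x. x ^ k = x}"

text \<open>Words of length n over GF(q) indexed by the (finite) code locator set L: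
  functions L -> GF(q), extended by 0 outside L.\<close>
definition words :: "nat \<Rightarrow> ('a::field) set \<Rightarrow> ('a \<Rightarrow> 'a) set" where
  "words q L = {c. (\<forall>a. a \<notin> L \<longrightarrow> c a = 0) \<and> (\<forall>a\<in>L. c a \<in> subfield_GF q)}"

definition goppa_code :: "nat \<Rightarrow> ('a::field) set \<Rightarrow> 'a poly \<Rightarrow> ('a \<Rightarrow> 'a) set" where
  "goppa_code q L P = {c \<in> words q L.
      \<forall>s < degree P. (\<Sum>a\<in>L. c a * a ^ s / poly P a) = 0}"

text \<open>H (given as a list of rows, each row a function on L) is a parity-check
  matrix of the q-ary code C.\<close>
definition is_parity_check :: "nat \<Rightarrow> ('a::field) set \<Rightarrow> ('a \<Rightarrow> 'a) list \<Rightarrow> ('a \<Rightarrow> 'a) set \<Rightarrow> bool" where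
  "is_parity_check q L H C \<longleftrightarrow>
     C = {c \<in> words q L. \<forall>r \<in> set H. (\<Sum>a\<in>L. c a * r a) = 0}"

definition G4 :: "nat \<Rightarrow> ('a::field) poly" where
  "G4 t = monom 1 t + monom 1 (t - 1) + 1"

definition G5 :: "nat \<Rightarrow> ('a::field) poly" where
  "G5 t = monom 1 (t + 1) + monom 1 t + monom 1 1"

definition L4star :: "nat \<Rightarrow> ('a::field) set" where
  "L4star t = {a. a \<noteq> 0 \<and> poly (G4 t) a \<noteq> 0}"

end

theory Submission imports Defs "HOL-Number_Theory.Residues" begin

lemma fin_pow_card:
  fixes x :: "'a :: {finite,field}"
  shows   "x ^ card (UNIV :: 'a set) = x"
proof (cases "x = 0")
  case False
  have "x * (\<Prod>y\<in>UNIV-{0}. x * y) = x * x ^ (card (UNIV :: 'a set) - 1) * \<Prod>(UNIV-{0})"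
    by (simp add: prod.distrib mult_ac)
  also have "x * x ^ (card (UNIV :: 'a set) - 1) = x ^ Suc (card (UNIV :: 'a set) - 1)"
    by (subst power_Suc) auto
  also have "Suc (card (UNIV :: 'a set) - 1) = card (UNIV :: 'a set)"
    using finite_UNIV_card_ge_0[where ?'a = 'a] by simp
  also have "(\<Prod>y\<in>UNIV-{0}. x * y) = (\<Prod>y\<in>UNIV-{0}. y)"
    by (rule prod.reindex_bij_witness[of _ "\<lambda>y. y / x" "\<lambda>y. x * y"]) (use False in auto)
  finally show ?thesis
    by simp
qed (use finite_UNIV_card_ge_0[where ?'a = 'a] in auto)

lemma char_lemma:
  assumes "prime p" "k > 0" "card (UNIV :: 'a::{finite,field} set) = p ^ k"
  shows "CHAR('a) = p"
proof -
  have pos: "CHAR('a) > 0" by (rule finite_imp_CHAR_pos) simp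
  have pr: "prime CHAR('a)" using prime_CHAR_semidom[where ?'a = 'a] pos by blast
  have "CHAR('a) dvd p ^ k" using CHAR_dvd_CARD[where ?'a='a] assms(3) by simp
  hence "CHAR('a) dvd p" using pr prime_dvd_power by blast
  thus ?thesis using pr assms(1) primes_dvd_imp_eq by blast
qed


lemma pow_iter:
  fixes x :: "'a::field"
  assumes "x ^ q = x" shows "x ^ (q ^ n) = x"
proof (induction n)
  case (Suc n)
  have "x ^ (q ^ Suc n) = (x ^ (q ^ n)) ^ q" by (simp only: power_Suc2 power_mult)
  thus ?case using Suc assms by simp
qed simp

theorem lemma6:
  fixes q l t i :: nat
    and F :: "'a::{finite,field} itself"
  assumes "\<exists>p k. prime p \<and> k > 0 \<and> q = p ^ k"
    and "l \<ge> 1" and "t = q ^ l"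
    and "card (UNIV :: 'a set) = t ^ 2"
    and "1 \<le> i" and "i < q - 1"
  shows "is_parity_check q (L4star t :: 'a set)
           ((\<lambda>a. 1 / poly (G5 t) a ^ i) # map (\<lambda>s a. a ^ s / poly (G4 t) a ^ i) [0..<i * t])
           (goppa_code q (L4star t :: 'a set) (G5 t ^ i))
       \<and> goppa_code q (L4star t :: 'a set) (G5 t ^ i)
           = {c \<in> goppa_code q (L4star t) (G4 t ^ i). (\<Sum>a\<in>(L4star t :: 'a set). c a / poly (G5 t) a ^ i) = 0}
       \<and> (\<forall>a \<in> L4star t. 1 / poly (G5 t) a ^ i \<in> (subfield_GF t :: 'a set))"
proof -
  obtain p k where pk: "prime p" "k > 0" "q = p ^ k" using assms(1) by blast
  have tp: "t = p ^ (k * l)" using pk assms(3) by (simp add: power_mult)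
  have kl: "k * l * 2 > 0" using pk assms(2) by simp
  have card: "card (UNIV :: 'a set) = p ^ (k * l * 2)"
    using assms(4) tp by (simp add: power_mult)
  have ch: "CHAR('a) = p" by (rule char_lemma[OF pk(1) kl card])
  have prCH: "prime CHAR('a)" using ch pk by simp
  have frob_add: "\<And>x y::'a. (x + y) ^ t = x ^ t + y ^ t"
    by (rule freshmans_dream'[OF prCH]) (simp add: ch tp)
  have frob_sum: "\<And>(f :: 'a \<Rightarrow> 'a) A. (sum f A) ^ t = sum (\<lambda>a. f a ^ t) A"
    by (rule freshmans_dream_sum'[OF prCH]) (simp add: ch tp)
  have tt: "\<And>x::'a. x ^ (t * t) = x"
    using fin_pow_card[where 'a='a] assms(4) by (simp add: power2_eq_square)
  have "p ^ 1 \<le> p ^ k" by (rule power_increasing) (use pk prime_gt_0_nat[OF pk(1)] in auto)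
  hence q2: "q \<ge> 2" using pk prime_ge_2_nat[OF pk(1)] by simp
  have "q ^ 1 \<le> q ^ l" by (rule power_increasing) (use assms(2) q2 in auto)
  hence "q \<le> t" using assms(3) by simp
  hence t2: "t \<ge> 2" and it: "i < t" using q2 assms(6) by auto
  have cq: "\<And>x::'a. x ^ q = x \<Longrightarrow> x ^ t = x" using pow_iter assms(3) by blast
  obtain t' where t': "t = Suc t'" using t2 by (cases t) auto
  have pG4: "\<And>a::'a. poly (G4 t) a = a ^ t + a ^ (t - 1) + 1"
    by (simp add: G4_def poly_monom)
  have pG5: "\<And>a::'a. poly (G5 t) a = a ^ (t + 1) + a ^ t + a"
    by (simp add: G5_def poly_monom)
  have pG54: "\<And>a::'a. poly (G5 t) a = a * poly (G4 t) a"
  proof -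
    fix a :: 'a
    have "a * (a ^ t + a ^ (t - 1) + 1) = a ^ (t + 1) + a ^ t + a"
      using t' by (simp add: algebra_simps)
    thus "poly (G5 t) a = a * poly (G4 t) a" unfolding pG4 pG5 by simp
  qed
  have degG4: "degree (G4 t :: 'a poly) = t"
  proof -
    have "degree (Polynomial.monom (1::'a) t + Polynomial.monom 1 (t - 1)) = t"
      by (subst degree_add_eq_left) (use t2 in \<open>auto simp: degree_monom_eq\<close>)
    thus ?thesis unfolding G4_def using t2
      by (subst degree_add_eq_left) auto
  qed
  have degG5: "degree (G5 t :: 'a poly) = t + 1"
  proof -
    have "degree (Polynomial.monom (1::'a) (t+1) + Polynomial.monom 1 t) = t + 1"
      by (subst degree_add_eq_left) (auto simp: degree_monom_eq)
    thus ?thesis unfolding G5_def using t2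
      by (subst degree_add_eq_left) (auto simp: degree_monom_eq)
  qed
  have degG4i: "degree (G4 t ^ i :: 'a poly) = i * t"
    using degG4 t2 by (subst degree_power_eq) auto
  have degG5i: "degree (G5 t ^ i :: 'a poly) = i * (t + 1)"
    using degG5 by (subst degree_power_eq) auto
  have hfrob: "\<And>a::'a. poly (G5 t) a ^ t = poly (G5 t) a"
  proof -
    fix a :: 'a
    have "poly (G5 t) a ^ t = (a ^ (t + 1)) ^ t + (a ^ t) ^ t + a ^ t"
      unfolding pG5 frob_add ..
    also have "(a ^ (t + 1)) ^ t = a ^ ((t + 1) * t)" by (rule power_mult[symmetric])
    also have "(t + 1) * t = t * t + t" by simp
    also have "a ^ (t * t + t) = a ^ (t * t) * a ^ t" by (rule power_add)
    also have "(a ^ t) ^ t = a ^ (t * t)" by (simp add: power_mult)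
    finally show "poly (G5 t) a ^ t = poly (G5 t) a" unfolding tt pG5 by (simp add: algebra_simps)
  qed
  define L where "L = (L4star t :: 'a set)"
  have finL: "finite L" by simp
  have Lnz: "\<And>a. a \<in> L \<Longrightarrow> a \<noteq> 0 \<and> poly (G4 t) a \<noteq> 0 \<and> poly (G5 t) a \<noteq> 0"
    unfolding L_def L4star_def using pG54 by auto
  define S where "S = (\<lambda>(c :: 'a \<Rightarrow> 'a) s. \<Sum>a\<in>L. c a * a ^ s / poly (G5 t) a ^ i)"
  have wq: "\<And>c a. c \<in> words q L \<Longrightarrow> c a ^ t = c a"
  proof -
    fix c a assume c: "c \<in> words q L"
    show "c a ^ t = c a"
    proof (cases "a \<in> L")
      case True
      hence "c a ^ q = c a" using c unfolding words_def subfield_GF_def by blast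
      thus ?thesis by (rule cq)
    next
      case False
      hence "c a = 0" using c unfolding words_def by blast
      thus ?thesis using t2 by simp
    qed
  qed
  have keyF: "\<And>c s. c \<in> words q L \<Longrightarrow> S c (s * t) ^ t = S c s"
  proof -
    fix c s assume c: "c \<in> words q L"
    show "S c (s * t) ^ t = S c s" unfolding S_def frob_sum
    proof (rule sum.cong[OF refl])
      fix a assume "a \<in> L"
      have "(c a * a ^ (s * t) / poly (G5 t) a ^ i) ^ t
          = c a ^ t * (a ^ (t * t)) ^ s / (poly (G5 t) a ^ t) ^ i"
      proof -
        have "(a ^ (s * t)) ^ t = (a ^ (t * t)) ^ s"
          by (simp only: power_mult[symmetric] mult.commute mult.left_commute)
        moreover have "(poly (G5 t) a ^ i) ^ t = (poly (G5 t) a ^ t) ^ i"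
          by (simp only: power_mult[symmetric] mult.commute)
        ultimately show ?thesis by (simp only: power_mult_distrib power_divide)
      qed
      thus "(c a * a ^ (s * t) / poly (G5 t) a ^ i) ^ t = c a * a ^ s / poly (G5 t) a ^ i"
        unfolding tt hfrob wq[OF c] .
    qed
  qed
  have r4: "\<And>a c s. a \<in> L \<Longrightarrow> c * a ^ s / poly (G4 t) a ^ i = c * a ^ (s + i) / poly (G5 t) a ^ i"
    using Lnz by (simp add: pG54 power_mult_distrib power_add)
  have C5: "goppa_code q L (G5 t ^ i) = {c \<in> words q L. \<forall>s < i * (t + 1). S c s = 0}"
    unfolding goppa_code_def degG5i S_def poly_power ..
  have C4: "goppa_code q L (G4 t ^ i) = {c \<in> words q L. \<forall>s < i * t. S c (s + i) = 0}"
    unfolding goppa_code_def degG4i S_def poly_power using r4 by (auto cong: sum.cong)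
  have main: "\<And>c. c \<in> words q L \<Longrightarrow>
     (\<forall>s < i * (t + 1). S c s = 0) \<longleftrightarrow> S c 0 = 0 \<and> (\<forall>s < i * t. S c (s + i) = 0)"
  proof
    fix c assume c: "c \<in> words q L"
    assume h: "\<forall>s < i * (t + 1). S c s = 0"
    show "S c 0 = 0 \<and> (\<forall>s < i * t. S c (s + i) = 0)"
      using h assms(5) by auto
  next
    fix c assume c: "c \<in> words q L"
    assume h: "S c 0 = 0 \<and> (\<forall>s < i * t. S c (s + i) = 0)"
    show "\<forall>s < i * (t + 1). S c s = 0"
    proof (intro allI impI)
      fix s assume s: "s < i * (t + 1)"
      show "S c s = 0"
      proof (cases "s = 0")
        case True thus ?thesis using h by simp
      next
        case False
        show ?thesis
        proof (cases "i \<le> s")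
          case True
          have "s - i < i * t" using s True by (simp add: algebra_simps)
          thus ?thesis using h True by (metis le_add_diff_inverse2)
        next
          case ni: False
          have "t \<le> s * t" using False by simp
          hence ge: "i \<le> s * t" using it by linarith
          have "s * t < i * t" using ni t2 by simp
          hence "s * t - i < i * t" by linarith
          hence "S c (s * t) = 0" using h ge by (metis le_add_diff_inverse2)
          hence "S c s = 0 ^ t" using keyF[OF c, of s] by simp
          thus ?thesis using t2 by simp
        qed
      qed
    qed
  qed
  have S0: "\<And>c. (\<Sum>a\<in>L. c a / poly (G5 t) a ^ i) = S c 0" unfolding S_def by simp
  have eqC: "goppa_code q L (G5 t ^ i)
           = {c \<in> goppa_code q L (G4 t ^ i). (\<Sum>a\<in>L. c a / poly (G5 t) a ^ i) = 0}"
    unfolding C5 C4 S0 using main by blast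
  have par: "is_parity_check q L
           ((\<lambda>a. 1 / poly (G5 t) a ^ i) # map (\<lambda>s a. a ^ s / poly (G4 t) a ^ i) [0..<i * t])
           (goppa_code q L (G5 t ^ i))"
  proof -
    have r1: "\<And>c. (\<Sum>a\<in>L. c a * (1 / poly (G5 t) a ^ i)) = S c 0" unfolding S_def by simp
    have r2: "\<And>c s. (\<Sum>a\<in>L. c a * (a ^ s / poly (G4 t) a ^ i)) = S c (s + i)"
      unfolding S_def using r4 by (auto intro!: sum.cong simp del: power_add)
    have r3: "\<And>c s. (\<Sum>a\<in>L. c a * a ^ s / poly (G4 t) a ^ i) = S c (s + i)"
      unfolding S_def using r4 by (auto intro!: sum.cong simp del: power_add)
    show ?thesis unfolding is_parity_check_def eqC C4
      by (auto simp: r1 r2 r3)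
  qed
  have sub: "\<forall>a \<in> L. 1 / poly (G5 t) a ^ i \<in> (subfield_GF t :: 'a set)"
  proof
    fix a :: 'a
    have "(poly (G5 t) a ^ i) ^ t = (poly (G5 t) a ^ t) ^ i"
      by (simp only: power_mult[symmetric] mult.commute)
    thus "1 / poly (G5 t) a ^ i \<in> (subfield_GF t :: 'a set)"
      unfolding subfield_GF_def by (simp add: power_divide hfrob)
  qed
  show ?thesis using par eqC sub unfolding L_def by simp
qed

end
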